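(* Let $X$ be a Banach space containing no (isomorphic) copy of $c_0$, and let $\sum x_n$ be a series in $X$ which is not unconditionally convergent. Then the sets $E=\left\{s \in S : \left(\sum_{i=1}^n x_{s(i)}\right)_n \text{ is bounded}\right\}$ and $F=\left\{p \in P : \left(\sum_{i=1}^n x_{p(i)}\right)_n \text{ is bounded}\right\}$ are meager in $S$ and $P$, respectively.
   Context: $S=\{s\in\mathbb{N}^{\mathbb{N}} : s \text{ strictly increasing}\}$ and $P=\{p\in\mathbb{N}^{\mathbb{N}} : p \text{ a bijection of }\mathbb{N}\}$, with the subspace topology of $\mathbb{N}^{\mathbb{N}}$ (product of discrete spaces). *)

theory Defs
  imports "HOL-Analysis.Analysis"
begin

definition baire_top :: "(nat \<Rightarrow> nat) topology" where
  "baire_top = product_topology (\<lambda>_. discrete_topology (UNIV :: nat set)) UNIV"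

definition S_incr :: "(nat \<Rightarrow> nat) set" where
  "S_incr = {s. strict_mono s}"

definition P_perm :: "(nat \<Rightarrow> nat) set" where
  "P_perm = {p. bij p}"

definition nowhere_dense_in :: "'a topology \<Rightarrow> 'a set \<Rightarrow> bool" where
  "nowhere_dense_in T N \<longleftrightarrow> N \<subseteq> topspace T \<and> T interior_of (T closure_of N) = {}"

definition meager_in :: "'a topology \<Rightarrow> 'a set \<Rightarrow> bool" where
  "meager_in T A \<longleftrightarrow> (\<exists>\<F>. countable \<F> \<and> (\<forall>N\<in>\<F>. nowhere_dense_in T N) \<and> A \<subseteq> \<Union>\<F>)"

definition c0 :: "(nat \<Rightarrow> real) set" where
  "c0 = {f. f \<longlonglongrightarrow> 0}"

definition sup_norm :: "(nat \<Rightarrow> real) \<Rightarrow> real" where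
  "sup_norm f = (SUP n. \<bar>f n\<bar>)"

definition contains_c0 :: "'a::real_normed_vector itself \<Rightarrow> bool" where
  "contains_c0 _ \<longleftrightarrow> (\<exists>(T :: (nat \<Rightarrow> real) \<Rightarrow> 'a) a b. a > 0 \<and> b > 0 \<and>
      (\<forall>f\<in>c0. \<forall>g\<in>c0. T (\<lambda>n. f n + g n) = T f + T g) \<and>
      (\<forall>f\<in>c0. \<forall>c. T (\<lambda>n. c * f n) = c *\<^sub>R T f) \<and>
      (\<forall>f\<in>c0. a * sup_norm f \<le> norm (T f) \<and> norm (T f) \<le> b * sup_norm f))"

definition uncond_convergent :: "(nat \<Rightarrow> 'a::real_normed_vector) \<Rightarrow> bool" where
  "uncond_convergent x \<longleftrightarrow> (\<forall>p. bij p \<longrightarrow> summable (\<lambda>n. x (p n)))"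

end

theory Submission
  imports Defs
begin

definition goodG :: "'a::real_normed_vector \<Rightarrow> ('a \<times> real) set \<Rightarrow> bool" where
  "goodG e G \<longleftrightarrow> (e, norm e) \<in> G \<and> (\<forall>x a b. (x,a)\<in>G \<longrightarrow> (x,b)\<in>G \<longrightarrow> a = b)
   \<and> (\<forall>x a y b. (x,a)\<in>G \<longrightarrow> (y,b)\<in>G \<longrightarrow> (x+y, a+b) \<in> G)
   \<and> (\<forall>x a c. (x,a)\<in>G \<longrightarrow> (c *\<^sub>R x, c*a) \<in> G) \<and> (\<forall>x a. (x,a)\<in>G \<longrightarrow> a \<le> norm x)"

lemma goodG_init: "goodG e {(c *\<^sub>R e, c * norm e) | c. True}"
proof -
  have fn0: "a = b" if "(x,a) \<in> {(c *\<^sub>R e, c * norm e) | c. True}" "(x,b) \<in> {(c *\<^sub>R e, c * norm e) | c. True}" for x a b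
  proof -
    from that(1) obtain c where c: "x = c *\<^sub>R e" "a = c * norm e" by blast
    from that(2) obtain d where d: "x = d *\<^sub>R e" "b = d * norm e" by blast
    note cd = c d
    show ?thesis
    proof (cases "e = 0")
      case True then show ?thesis using cd by simp
    next
      case False
      have "c *\<^sub>R e = d *\<^sub>R e" using cd(1) cd(3) by metis
      then have "(c - d) *\<^sub>R e = 0" by (simp add: scaleR_diff_left)
      then have "c = d" using False by simp
      then show ?thesis using cd by simp
    qed
  qed
  show ?thesis unfolding goodG_def
  proof (intro conjI allI impI)
    show "(e, norm e) \<in> {(c *\<^sub>R e, c * norm e) | c. True}" by (rule CollectI, rule exI[of _ 1]) simp
  next
    fix x a b assume "(x, a) \<in> {(c *\<^sub>R e, c * norm e) |c. True}" "(x, b) \<in> {(c *\<^sub>R e, c * norm e) |c. True}"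
    then show "a = b" by (rule fn0)
  next
    fix x a y b assume "(x, a) \<in> {(c *\<^sub>R e, c * norm e) |c. True}" "(y, b) \<in> {(c *\<^sub>R e, c * norm e) |c. True}"
    then obtain c d where "x = c *\<^sub>R e" "a = c * norm e" "y = d *\<^sub>R e" "b = d * norm e" by auto
    then show "(x + y, a + b) \<in> {(c *\<^sub>R e, c * norm e) |c. True}"
      by (intro CollectI exI[of _ "c+d"]) (simp add: scaleR_add_left distrib_right)
  next
    fix x a c assume "(x, a) \<in> {(c *\<^sub>R e, c * norm e) |c. True}"
    then obtain d where "x = d *\<^sub>R e" "a = d * norm e" by auto
    then show "(c *\<^sub>R x, c * a) \<in> {(c *\<^sub>R e, c * norm e) |c. True}"
      by (intro CollectI exI[of _ "c*d"]) simp
  next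
    fix x a assume "(x, a) \<in> {(c *\<^sub>R e, c * norm e) |c. True}"
    then obtain d where "x = d *\<^sub>R e" "a = d * norm e" by auto
    then show "a \<le> norm x" by (simp add: mult_right_mono)
  qed
qed

lemma goodG_chain:
  assumes "C \<in> chains {G. goodG e G}" "C \<noteq> {}"
  shows "goodG e (\<Union>C)"
proof -
  have CA: "\<And>G. G \<in> C \<Longrightarrow> goodG e G" and ch: "\<And>A B. A \<in> C \<Longrightarrow> B \<in> C \<Longrightarrow> A \<subseteq> B \<or> B \<subseteq> A"
    using assms(1) unfolding chains_def chain_subset_def by auto
  have two: "\<exists>G\<in>C. p \<in> G \<and> q \<in> G" if "p \<in> \<Union>C" "q \<in> \<Union>C" for p q
  proof -
    from that obtain A B where "A \<in> C" "B \<in> C" "p \<in> A" "q \<in> B" by auto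
    then show ?thesis using ch[of A B] by auto
  qed
  show ?thesis unfolding goodG_def
  proof (intro conjI allI impI)
    obtain G where "G \<in> C" using assms(2) by auto
    then show "(e, norm e) \<in> \<Union>C" using CA[of G] unfolding goodG_def by auto
  next
    fix x a b assume "(x, a) \<in> \<Union>C" "(x, b) \<in> \<Union>C"
    then obtain G where "G \<in> C" "(x,a) \<in> G" "(x,b) \<in> G" using two by blast
    then show "a = b" using CA[of G] unfolding goodG_def by blast
  next
    fix x a y b assume "(x, a) \<in> \<Union>C" "(y, b) \<in> \<Union>C"
    then obtain G where "G \<in> C" "(x,a) \<in> G" "(y,b) \<in> G" using two by blast
    then show "(x + y, a + b) \<in> \<Union>C" using CA[of G] unfolding goodG_def by blast
  next
    fix x a c assume "(x, a) \<in> \<Union>C"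
    then obtain G where "G \<in> C" "(x,a) \<in> G" by blast
    then show "(c *\<^sub>R x, c * a) \<in> \<Union>C" using CA[of G] unfolding goodG_def by blast
  next
    fix x a assume "(x, a) \<in> \<Union>C"
    then obtain G where "G \<in> C" "(x,a) \<in> G" by blast
    then show "a \<le> norm x" using CA[of G] unfolding goodG_def by blast
  qed
qed

lemma goodG_extend:
  assumes G: "goodG e G" and z: "\<forall>c. (z,c) \<notin> G"
  shows "\<exists>G'. goodG e G' \<and> G \<subseteq> G' \<and> G' \<noteq> G"
proof -
  have fn: "\<And>x a b. (x,a)\<in>G \<Longrightarrow> (x,b)\<in>G \<Longrightarrow> a = b"
    and ad: "\<And>x a y b. (x,a)\<in>G \<Longrightarrow> (y,b)\<in>G \<Longrightarrow> (x+y, a+b) \<in> G"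
    and sc: "\<And>x a c. (x,a)\<in>G \<Longrightarrow> (c *\<^sub>R x, c*a) \<in> G"
    and bd: "\<And>x a. (x,a)\<in>G \<Longrightarrow> a \<le> norm x"
    and eG: "(e, norm e) \<in> G"
    using G unfolding goodG_def by blast+
  have z0: "(0,0) \<in> G" using sc[OF eG, of 0] by simp
  define L where "L = {a - norm (x - z) | x a. (x,a) \<in> G}"
  define c where "c = Sup L"
  have Lne: "L \<noteq> {}" using z0 unfolding L_def by blast
  have Lle: "l \<le> norm (y + z) - b" if "l \<in> L" "(y,b) \<in> G" for l y b
  proof -
    from that obtain x a where xa: "(x,a) \<in> G" "l = a - norm (x - z)" unfolding L_def by blast
    have "a + b \<le> norm (x + y)" using bd[OF ad[OF xa(1) that(2)]] .
    also have "norm (x + y) \<le> norm (x - z) + norm (y + z)"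
      using norm_triangle_ineq[of "x - z" "y + z"] by simp
    finally show ?thesis using xa by simp
  qed
  have c_up: "c \<le> norm (y + z) - b" if "(y,b) \<in> G" for y b
    unfolding c_def by (rule cSup_least[OF Lne]) (use Lle that in blast)
  have bdd: "bdd_above L" using Lle z0 by (intro bdd_aboveI) blast
  have c_lo: "a - norm (x - z) \<le> c" if "(x,a) \<in> G" for x a
    unfolding c_def by (rule cSup_upper[OF _ bdd]) (use that L_def in blast)
  define G' where "G' = {(x + t *\<^sub>R z, a + t * c) | x a t. (x,a) \<in> G}"
  have sub: "G \<subseteq> G'" unfolding G'_def by force
  have zin: "(z, c) \<in> G'" unfolding G'_def using z0 by force
  have "goodG e G'" unfolding goodG_def
  proof (intro conjI allI impI)
    show "(e, norm e) \<in> G'" using sub eG by blast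
  next
    fix v a' b' assume "(v, a') \<in> G'" "(v, b') \<in> G'"
    then obtain x a t y b s where A: "(x,a) \<in> G" "v = x + t *\<^sub>R z" "a' = a + t * c"
      and B: "(y,b) \<in> G" "v = y + s *\<^sub>R z" "b' = b + s * c" unfolding G'_def by blast
    have "t = s"
    proof (rule ccontr)
      assume ts: "t \<noteq> s"
      have "(x + (-1) *\<^sub>R y, a + (-1) * b) \<in> G" using ad[OF A(1) sc[OF B(1)]] .
      then have "(x - y, a - b) \<in> G" by simp
      then have "((1/(s - t)) *\<^sub>R (x - y), (1/(s-t)) * (a - b)) \<in> G" by (rule sc)
      moreover have "x - y = (s - t) *\<^sub>R z" using A(2) B(2) by (simp add: algebra_simps)
      ultimately have "(z, (1/(s-t)) * (a - b)) \<in> G" using ts by simp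
      then show False using z by blast
    qed
    then have "x = y" using A(2) B(2) by simp
    then have "a = b" using fn A(1) B(1) by blast
    then show "a' = b'" using A B \<open>t = s\<close> by simp
  next
    fix v a' w b' assume "(v, a') \<in> G'" "(w, b') \<in> G'"
    then obtain x a t y b s where A: "(x,a) \<in> G" "v = x + t *\<^sub>R z" "a' = a + t * c"
      and B: "(y,b) \<in> G" "w = y + s *\<^sub>R z" "b' = b + s * c" unfolding G'_def by blast
    show "(v + w, a' + b') \<in> G'" unfolding G'_def
      by (rule CollectI, rule exI[of _ "x+y"], rule exI[of _ "a+b"], rule exI[of _ "t+s"])
        (use A B ad in \<open>auto simp: algebra_simps\<close>)
  next
    fix v a' r assume "(v, a') \<in> G'"
    then obtain x a t where A: "(x,a) \<in> G" "v = x + t *\<^sub>R z" "a' = a + t * c" unfolding G'_def by blast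
    show "(r *\<^sub>R v, r * a') \<in> G'" unfolding G'_def
      by (rule CollectI, rule exI[of _ "r *\<^sub>R x"], rule exI[of _ "r*a"], rule exI[of _ "r*t"])
        (use A sc in \<open>auto simp: algebra_simps\<close>)
  next
    fix v a' assume "(v, a') \<in> G'"
    then obtain x a t where A: "(x,a) \<in> G" "v = x + t *\<^sub>R z" "a' = a + t * c" unfolding G'_def by blast
    consider "t = 0" | "t > 0" | "t < 0" by linarith
    then show "a' \<le> norm v"
    proof cases
      case 1 then show ?thesis using A bd by simp
    next
      case 2
      have "((1/t) *\<^sub>R x, (1/t) * a) \<in> G" using sc A(1) by blast
      from c_up[OF this] have "c \<le> norm ((1/t) *\<^sub>R x + z) - a / t" by simp
      also have "(1/t) *\<^sub>R x + z = (1/t) *\<^sub>R v" using A(2) 2 by (simp add: algebra_simps)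
      finally have "c \<le> norm v / t - a / t" using 2 by simp
      then have "t * c \<le> t * (norm v / t - a / t)" using 2 by (simp add: mult_left_mono)
      then show ?thesis using A(3) 2 by (simp add: algebra_simps)
    next
      case 3
      define s where "s = - t"
      have s: "s > 0" using 3 s_def by simp
      have "((1/s) *\<^sub>R x, (1/s) * a) \<in> G" using sc A(1) by blast
      from c_lo[OF this] have "a / s - norm ((1/s) *\<^sub>R x - z) \<le> c" by simp
      also have "(1/s) *\<^sub>R x - z = (1/s) *\<^sub>R v" using A(2) s s_def by (simp add: algebra_simps)
      finally have "a / s - norm v / s \<le> c" using s by simp
      then have "s * (a / s - norm v / s) \<le> s * c" using s by (simp add: mult_left_mono)
      then show ?thesis using A(3) s s_def by (simp add: algebra_simps)
    qed
  qed
  moreover have "G' \<noteq> G" using zin z by blast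
  ultimately show ?thesis using sub by blast
qed

lemma hahn_banach_norming:
  fixes e :: "'a::real_normed_vector"
  shows "\<exists>f::'a \<Rightarrow> real. linear f \<and> (\<forall>v. \<bar>f v\<bar> \<le> norm v) \<and> f e = norm e"
proof -
  have "\<forall>C\<in>chains {G. goodG e G}. \<exists>U\<in>{G. goodG e G}. \<forall>X\<in>C. X \<subseteq> U"
  proof
    fix C assume C: "C \<in> chains {G. goodG e G}"
    show "\<exists>U\<in>{G. goodG e G}. \<forall>X\<in>C. X \<subseteq> U"
    proof (cases "C = {}")
      case True then show ?thesis using goodG_init by blast
    next
      case False then show ?thesis using goodG_chain[OF C] by blast
    qed
  qed
  from Zorn_Lemma2[OF this] obtain M where M: "goodG e M" and max: "\<And>X. goodG e X \<Longrightarrow> M \<subseteq> X \<Longrightarrow> X = M"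
    by blast
  have dom: "\<exists>a. (v,a) \<in> M" for v
  proof (rule ccontr)
    assume "\<nexists>a. (v, a) \<in> M"
    then obtain G' where "goodG e G'" "M \<subseteq> G'" "G' \<noteq> M" using goodG_extend[OF M, of v] by blast
    then show False using max by blast
  qed
  have fn: "\<And>x a b. (x,a)\<in>M \<Longrightarrow> (x,b)\<in>M \<Longrightarrow> a = b"
    and ad: "\<And>x a y b. (x,a)\<in>M \<Longrightarrow> (y,b)\<in>M \<Longrightarrow> (x+y, a+b) \<in> M"
    and sc: "\<And>x a c. (x,a)\<in>M \<Longrightarrow> (c *\<^sub>R x, c*a) \<in> M"
    and bd: "\<And>x a. (x,a)\<in>M \<Longrightarrow> a \<le> norm x"
    and eM: "(e, norm e) \<in> M"
    using M unfolding goodG_def by blast+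
  define f where "f v = (THE a. (v,a) \<in> M)" for v
  have fM: "(v, f v) \<in> M" for v
    unfolding f_def using dom[of v] fn by (metis theI)
  have fv: "(v,a) \<in> M \<Longrightarrow> f v = a" for v a using fM fn by blast
  have lin: "linear f"
  proof (rule linearI)
    show "f (b1 + b2) = f b1 + f b2" for b1 b2 using fv[OF ad[OF fM fM]] .
    show "f (r *\<^sub>R b) = r *\<^sub>R f b" for r b using fv[OF sc[OF fM]] by simp
  qed
  have "\<bar>f v\<bar> \<le> norm v" for v
  proof -
    have "f v \<le> norm v" using bd[OF fM] .
    moreover have "- f v \<le> norm v" using bd[OF sc[OF fM[of v], of "-1"]] by simp
    ultimately show ?thesis by linarith
  qed
  moreover have "f e = norm e" using fv[OF eM] .
  ultimately show ?thesis using lin by blast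
qed

definition nbl :: "('a::real_normed_vector \<Rightarrow> real) \<Rightarrow> bool" where
  "nbl f \<longleftrightarrow> linear f \<and> (\<forall>v. \<bar>f v\<bar> \<le> norm v)"

lemma nbl_exists: "\<exists>f. nbl f \<and> f e = norm e"
  using hahn_banach_norming[of e] unfolding nbl_def by blast

lemma abs_sum_fun_bound:
  fixes u :: "nat \<Rightarrow> 'a::real_normed_vector"
  assumes f: "nbl f" and ubd: "\<forall>A. finite A \<longrightarrow> norm (\<Sum>k\<in>A. u k) \<le> K" and A: "finite A"
  shows "(\<Sum>k\<in>A. \<bar>f (u k)\<bar>) \<le> 2 * K"
proof -
  have lin: "linear f" and fb: "\<And>v. \<bar>f v\<bar> \<le> norm v" using f unfolding nbl_def by auto
  have "(\<Sum>k\<in>A. \<bar>f (u k)\<bar>) = (\<Sum>k\<in>A. if 0 \<le> f (u k) then f (u k) else - f (u k))"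
    by (rule sum.cong) auto
  also have "\<dots> = (\<Sum>k\<in>A \<inter> {k. 0 \<le> f (u k)}. f (u k)) + (\<Sum>k\<in>A \<inter> - {k. 0 \<le> f (u k)}. - f (u k))"
    by (rule sum.If_cases[OF A])
  also have "\<dots> = f (\<Sum>k\<in>A \<inter> {k. 0 \<le> f (u k)}. u k) - f (\<Sum>k\<in>A \<inter> - {k. 0 \<le> f (u k)}. u k)"
    by (simp add: real_vector.linear_sum[OF lin] sum_negf)
  also have "\<dots> \<le> norm (\<Sum>k\<in>A \<inter> {k. 0 \<le> f (u k)}. u k) + norm (\<Sum>k\<in>A \<inter> - {k. 0 \<le> f (u k)}. u k)"
    using fb[of "\<Sum>k\<in>A \<inter> {k. 0 \<le> f (u k)}. u k"] fb[of "\<Sum>k\<in>A \<inter> - {k. 0 \<le> f (u k)}. u k"] by linarith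
  also have "\<dots> \<le> K + K" using ubd A by (intro add_mono) auto
  finally show ?thesis by simp
qed

lemma wuc_norm:
  fixes w :: "nat \<Rightarrow> 'a::real_normed_vector"
  assumes hyp: "\<forall>f. nbl f \<longrightarrow> (\<forall>A. finite A \<longrightarrow> (\<Sum>k\<in>A. \<bar>f (w k)\<bar>) \<le> B)"
    and A: "finite A" and c: "\<forall>k\<in>A. \<bar>c k\<bar> \<le> \<delta>" and d: "0 \<le> \<delta>"
  shows "norm (\<Sum>k\<in>A. c k *\<^sub>R w k) \<le> B * \<delta>"
proof -
  obtain g where g: "nbl g" "g (\<Sum>k\<in>A. c k *\<^sub>R w k) = norm (\<Sum>k\<in>A. c k *\<^sub>R w k)"
    using nbl_exists by blast
  have lin: "linear g" using g(1) unfolding nbl_def by auto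
  have "norm (\<Sum>k\<in>A. c k *\<^sub>R w k) = (\<Sum>k\<in>A. c k * g (w k))"
    using g(2) by (simp add: real_vector.linear_sum[OF lin] real_vector.linear_scale[OF lin])
  also have "\<dots> \<le> (\<Sum>k\<in>A. \<delta> * \<bar>g (w k)\<bar>)"
  proof (rule sum_mono)
    fix k assume "k \<in> A"
    have "c k * g (w k) \<le> \<bar>c k\<bar> * \<bar>g (w k)\<bar>" by (simp add: abs_mult[symmetric])
    also have "\<dots> \<le> \<delta> * \<bar>g (w k)\<bar>" using c \<open>k \<in> A\<close> by (intro mult_right_mono) auto
    finally show "c k * g (w k) \<le> \<delta> * \<bar>g (w k)\<bar>" .
  qed
  also have "\<dots> = \<delta> * (\<Sum>k\<in>A. \<bar>g (w k)\<bar>)" by (simp add: sum_distrib_left)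
  also have "\<dots> \<le> \<delta> * B" using hyp g(1) A d by (intro mult_left_mono) auto
  finally show ?thesis by (simp add: mult.commute)
qed

lemma weak_null:
  fixes w :: "nat \<Rightarrow> 'a::real_normed_vector"
  assumes hyp: "\<forall>f. nbl f \<longrightarrow> (\<forall>A. finite A \<longrightarrow> (\<Sum>k\<in>A. \<bar>f (w k)\<bar>) \<le> B)" and f: "nbl f"
  shows "(\<lambda>k. f (w k)) \<longlonglongrightarrow> 0"
proof -
  have "summable (\<lambda>k. \<bar>f (w k)\<bar>)"
    by (rule summableI_nonneg_bounded[where x=B]) (use hyp f in auto)
  then have "(\<lambda>k. \<bar>f (w k)\<bar>) \<longlonglongrightarrow> 0" by (rule summable_LIMSEQ_zero)
  then show ?thesis by (simp add: tendsto_rabs_zero_iff)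
qed

lemma geom_half_sum: "(\<Sum>j<n. (1/2::real)^j) \<le> 2"
proof -
  have "(\<Sum>j<n. (1/2::real)^j) = 2 - 2 * (1/2)^n" by (induction n) auto
  then show ?thesis by simp
qed

lemma net_lemma:
  fixes w :: "nat \<Rightarrow> 'a::real_normed_vector"
  assumes h: "h > 0" and wK: "\<forall>j. norm (w j) \<le> K" and K: "K \<ge> 0"
    and a: "\<forall>j<p. \<bar>a j\<bar> \<le> 1"
  shows "\<exists>b\<in>PiE {..<p} (\<lambda>_. (\<lambda>i::int. of_int i * h) ` {- int (nat \<lceil>1/h\<rceil>) - 1 .. int (nat \<lceil>1/h\<rceil>)}).
           norm ((\<Sum>j<p. a j *\<^sub>R w j) - (\<Sum>j<p. b j *\<^sub>R w j)) \<le> real p * h * K"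
proof -
  define L where "L = nat \<lceil>1/h\<rceil>"
  have "0 \<le> \<lceil>1/h\<rceil>" using h by (simp add: less_trans[of "-1" 0]) 
  then have L: "int L = \<lceil>1/h\<rceil>" unfolding L_def by simp
  have L1: "1/h \<le> real L" using L by (metis le_of_int_ceiling of_int_of_nat_eq)
  define b where "b = restrict (\<lambda>j. of_int \<lfloor>a j / h\<rfloor> * h) {..<p}"
  have bin: "b \<in> PiE {..<p} (\<lambda>_. (\<lambda>i::int. of_int i * h) ` {- int L - 1 .. int L})"
  proof (unfold b_def, rule restrict_PiE_iff[THEN iffD2], intro ballI)
    fix j assume "j \<in> {..<p}"
    then have aj: "\<bar>a j\<bar> \<le> 1" using a by auto
    have hh: "a j / h \<le> 1 / h" "- (1/h) \<le> a j / h" using aj h by (auto simp: divide_right_mono field_simps)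
    have "\<lfloor>a j / h\<rfloor> \<le> int L" using hh(1) L1 by (simp add: floor_le_iff)
    moreover have "- int L - 1 \<le> \<lfloor>a j / h\<rfloor>" using hh(2) L1 by (simp add: le_floor_iff)
    ultimately show "of_int \<lfloor>a j / h\<rfloor> * h \<in> (\<lambda>i::int. of_int i * h) ` {- int L - 1 .. int L}" by auto
  qed
  have "norm ((\<Sum>j<p. a j *\<^sub>R w j) - (\<Sum>j<p. b j *\<^sub>R w j)) = norm (\<Sum>j<p. (a j - b j) *\<^sub>R w j)"
    by (simp add: sum_subtractf scaleR_diff_left)
  also have "\<dots> \<le> (\<Sum>j<p. norm ((a j - b j) *\<^sub>R w j))" by (rule norm_sum)
  also have "\<dots> \<le> (\<Sum>j<p. h * K)"
  proof (rule sum_mono)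
    fix j assume "j \<in> {..<p}"
    then have bj: "b j = of_int \<lfloor>a j / h\<rfloor> * h" unfolding b_def by simp
    have f1: "of_int \<lfloor>a j / h\<rfloor> \<le> a j / h" "a j / h < of_int \<lfloor>a j / h\<rfloor> + 1" by linarith+
    have "of_int \<lfloor>a j / h\<rfloor> * h \<le> (a j / h) * h" using f1(1) h by (intro mult_right_mono) auto
    then have "of_int \<lfloor>a j / h\<rfloor> * h \<le> a j" using h by simp
    moreover have "(a j / h) * h < (of_int \<lfloor>a j / h\<rfloor> + 1) * h" using f1(2) h by (intro mult_strict_right_mono) auto
    then have "a j < (of_int \<lfloor>a j / h\<rfloor> + 1) * h" using h by simp
    ultimately have "\<bar>a j - b j\<bar> \<le> h" using bj by (simp add: algebra_simps)
    then show "norm ((a j - b j) *\<^sub>R w j) \<le> h * K" using wK h by (simp add: mult_mono)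
  qed
  also have "\<dots> = real p * h * K" by simp
  finally show ?thesis using bin unfolding L_def by blast
qed

lemma c0_from_blocks:
  fixes u :: "nat \<Rightarrow> 'a::banach"
  assumes eps: "\<epsilon> > 0" and ulow: "\<forall>k. \<epsilon> \<le> norm (u k)"
    and ubd: "\<forall>A. finite A \<longrightarrow> norm (\<Sum>k\<in>A. u k) \<le> K"
  shows "contains_c0 TYPE('a)"
proof -
  have uK: "norm (u k) \<le> K" for k using ubd[rule_format, of "{k}"] by simp
  have Kpos: "K > 0" using uK[of 0] ulow eps by (meson less_le_trans order_trans)
  have wucu: "\<forall>f. nbl f \<longrightarrow> (\<forall>A. finite A \<longrightarrow> (\<Sum>k\<in>A. \<bar>f (u k)\<bar>) \<le> 2*K)"
    using abs_sum_fun_bound ubd by blast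
  define nf where "nf e = (SOME f. nbl f \<and> f e = norm e)" for e :: 'a
  have nf: "nbl (nf e) \<and> nf e e = norm e" for e
    unfolding nf_def using someI_ex[OF nbl_exists[of e]] .
  define h where "h p = \<epsilon> / (16 * ((real p + 1) * (K + 1)))" for p :: nat
  define grid where "grid p = (\<lambda>i::int. of_int i * h p) ` {- int (nat \<lceil>1/h p\<rceil>) - 1 .. int (nat \<lceil>1/h p\<rceil>)}" for p
  define G where "G p w = (\<lambda>b. \<Sum>j<p. b j *\<^sub>R w j) ` PiE {..<p} (\<lambda>_. grid p)" for p and w :: "nat \<Rightarrow> 'a"
  define \<eta> where "\<eta> j = \<epsilon>/16 * (1/2)^j" for j :: nat
  define chs where "chs j g = (SOME k'. (\<forall>i<j. g i < k') \<and> (\<forall>p\<le>j. \<forall>e\<in>G p (\<lambda>i. u (g i)). \<bar>nf e (u k')\<bar> \<le> \<eta> j))"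
    for j and g :: "nat \<Rightarrow> nat"
  define kk where "kk = rec_nat (\<lambda>_. 0::nat) (\<lambda>j g. g(j := chs j g))"
  have kkS: "kk (Suc j) = (kk j)(j := chs j (kk j))" for j unfolding kk_def by simp
  define sg where "sg j = kk (Suc j) j" for j
  define z where "z j = u (sg j)" for j
  have hpos: "h p > 0" for p unfolding h_def using eps Kpos by simp
  have finG: "finite (G p w)" for p w unfolding G_def grid_def by (intro finite_imageI finite_PiE) auto
  have Gcong: "G p w1 = G p w2" if "\<forall>i<p. w1 i = w2 i" for p w1 w2
    unfolding G_def by (rule image_cong[OF refl], rule sum.cong) (use that in auto)
  have chs_ex: "\<exists>k'. (\<forall>i<j. g i < k') \<and> (\<forall>p\<le>j. \<forall>e\<in>G p (\<lambda>i. u (g i)). \<bar>nf e (u k')\<bar> \<le> \<eta> j)" for j g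
  proof -
    have fin: "finite (\<Union>p\<in>{..j}. G p (\<lambda>i. u (g i)))" using finG by auto
    have etap: "\<eta> j > 0" unfolding \<eta>_def using eps by simp
    have ev1: "eventually (\<lambda>k. \<forall>e \<in> (\<Union>p\<in>{..j}. G p (\<lambda>i. u (g i))). \<bar>nf e (u k)\<bar> \<le> \<eta> j) sequentially"
    proof (rule eventually_ball_finite[OF fin], rule ballI)
      fix e
      have "(\<lambda>k. nf e (u k)) \<longlonglongrightarrow> 0" using weak_null[OF wucu] nf by blast
      then have "(\<lambda>k. \<bar>nf e (u k)\<bar>) \<longlonglongrightarrow> 0" by (simp add: tendsto_rabs_zero_iff)
      from order_tendstoD(2)[OF this etap] show "eventually (\<lambda>k. \<bar>nf e (u k)\<bar> \<le> \<eta> j) sequentially"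
        by (rule eventually_mono) simp
    qed
    have ev2: "eventually (\<lambda>k. \<forall>i\<in>{..<j}. g i < k) sequentially"
      by (rule eventually_ball_finite) (auto intro: eventually_gt_at_top)
    from eventually_conj[OF ev1 ev2] obtain N where
      "\<forall>e \<in> (\<Union>p\<in>{..j}. G p (\<lambda>i. u (g i))). \<bar>nf e (u N)\<bar> \<le> \<eta> j" "\<forall>i\<in>{..<j}. g i < N"
      unfolding eventually_sequentially by auto
    then show ?thesis by (intro exI[of _ N]) blast
  qed
  have kk_stable: "i < j \<Longrightarrow> kk j i = sg i" for i j
  proof (induction j)
    case 0 then show ?case by simp
  next
    case (Suc j)
    show ?case
    proof (cases "i = j")
      case True then show ?thesis unfolding sg_def by simp
    next
      case False then show ?thesis using Suc by (simp add: kkS)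
    qed
  qed
  have spec: "(\<forall>i<j. sg i < sg j) \<and> (\<forall>p\<le>j. \<forall>e\<in>G p z. \<bar>nf e (z j)\<bar> \<le> \<eta> j)" for j
  proof -
    have sgj: "sg j = chs j (kk j)" unfolding sg_def by (simp add: kkS)
    have c: "(\<forall>i<j. kk j i < sg j) \<and> (\<forall>p\<le>j. \<forall>e\<in>G p (\<lambda>i. u (kk j i)). \<bar>nf e (u (sg j))\<bar> \<le> \<eta> j)"
      unfolding sgj chs_def by (rule someI_ex) (rule chs_ex)
    have "G p (\<lambda>i. u (kk j i)) = G p z" if "p \<le> j" for p
      by (rule Gcong) (use that kk_stable in \<open>auto simp: z_def\<close>)
    then show ?thesis using c kk_stable by (auto simp: z_def)
  qed
  have smono: "strict_mono sg"
  proof (rule strict_monoI)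
    fix i j :: nat assume "i < j" then show "sg i < sg j" using spec[of j] by blast
  qed
  have zlow: "\<epsilon> \<le> norm (z j)" for j unfolding z_def using ulow by blast
  have zK: "\<forall>j. norm (z j) \<le> K" unfolding z_def using uK by blast
  have wucz: "\<forall>f. nbl f \<longrightarrow> (\<forall>A. finite A \<longrightarrow> (\<Sum>k\<in>A. \<bar>f (z k)\<bar>) \<le> 2*K)"
  proof (intro allI impI)
    fix f :: "'a \<Rightarrow> real" and A :: "nat set" assume f: "nbl f" and A: "finite A"
    have "(\<Sum>k\<in>sg ` A. \<bar>f (u k)\<bar>) = (\<Sum>k\<in>A. \<bar>f (z k)\<bar>)"
      using sum.reindex[OF strict_mono_imp_inj_on[OF smono], of "\<lambda>k. \<bar>f (u k)\<bar>" A]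
      by (simp add: z_def o_def)
    moreover have "(\<Sum>k\<in>sg ` A. \<bar>f (u k)\<bar>) \<le> 2*K" using wucu f A by blast
    ultimately show "(\<Sum>k\<in>A. \<bar>f (z k)\<bar>) \<le> 2*K" by simp
  qed
  define S where "S a m = (\<Sum>j<m. a j *\<^sub>R z j)" for a :: "nat \<Rightarrow> real" and m
  have keyK: "norm (S a p) - \<epsilon>/4 \<le> norm (S a n)" if pn: "p \<le> n" and a: "\<forall>j<n. \<bar>a j\<bar> \<le> 1" for a p n
  proof -
    have ap: "\<forall>j<p. \<bar>a j\<bar> \<le> 1" using a pn by auto
    obtain b where b: "b \<in> PiE {..<p} (\<lambda>_. grid p)"
      and bn: "norm (S a p - (\<Sum>j<p. b j *\<^sub>R z j)) \<le> real p * h p * K"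
      using net_lemma[OF hpos zK less_imp_le[OF Kpos] ap] unfolding grid_def S_def by blast
    define e where "e = (\<Sum>j<p. b j *\<^sub>R z j)"
    have eG: "e \<in> G p z" unfolding e_def G_def using b by blast
    have phK: "real p * h p * K \<le> \<epsilon>/16"
    proof -
      define X where "X = (real p + 1) * (K + 1)"
      have X: "X > 0" unfolding X_def using Kpos by simp
      have hd: "h p * (16 * X) = \<epsilon>" unfolding h_def X_def[symmetric] using X
        by (simp add: mult.assoc[symmetric])
      have "real p * K \<le> X" unfolding X_def using Kpos by (simp add: algebra_simps)
      then have "real p * K * h p \<le> X * h p" using hpos[of p] by (intro mult_right_mono) auto
      also have "X * h p = \<epsilon>/16" using hd by (simp add: algebra_simps)
      finally show ?thesis by (simp add: algebra_simps)
    qed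
    have close: "norm (S a p - e) \<le> \<epsilon>/16" using bn phK unfolding e_def by linarith
    have lin: "linear (nf e)" and fb: "\<And>v. \<bar>nf e v\<bar> \<le> norm v" and fe: "nf e e = norm e"
      using nf[of e] unfolding nbl_def by auto
    have seteq: "{..<n} = {..<p} \<union> {p..<n}" using pn by auto
    have Ssplit: "S a n = S a p + (\<Sum>j\<in>{p..<n}. a j *\<^sub>R z j)"
      unfolding S_def seteq by (rule sum.union_disjoint) auto
    have tail: "\<bar>nf e (\<Sum>j\<in>{p..<n}. a j *\<^sub>R z j)\<bar> \<le> \<epsilon>/8"
    proof -
      have "nf e (\<Sum>j\<in>{p..<n}. a j *\<^sub>R z j) = (\<Sum>j\<in>{p..<n}. a j * nf e (z j))"
        by (simp add: real_vector.linear_sum[OF lin] real_vector.linear_scale[OF lin])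
      then have "\<bar>nf e (\<Sum>j\<in>{p..<n}. a j *\<^sub>R z j)\<bar> \<le> (\<Sum>j\<in>{p..<n}. \<bar>a j * nf e (z j)\<bar>)"
        by (simp add: sum_abs)
      also have "\<dots> \<le> (\<Sum>j\<in>{p..<n}. \<eta> j)"
      proof (rule sum_mono)
        fix j assume j: "j \<in> {p..<n}"
        have "p \<le> j" using j by simp
        then have "\<bar>nf e (z j)\<bar> \<le> \<eta> j" using spec[of j] eG by blast
        moreover have "\<bar>a j\<bar> \<le> 1" using a j by auto
        ultimately have "\<bar>a j\<bar> * \<bar>nf e (z j)\<bar> \<le> 1 * \<eta> j"
          by (intro mult_mono) auto
        then show "\<bar>a j * nf e (z j)\<bar> \<le> \<eta> j" by (simp add: abs_mult)
      qed
      also have "\<dots> \<le> (\<Sum>j<n. \<eta> j)"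
        by (rule sum_mono2) (auto simp: \<eta>_def less_imp_le[OF eps])
      also have "\<dots> = \<epsilon>/16 * (\<Sum>j<n. (1/2)^j)" unfolding \<eta>_def by (simp add: sum_distrib_left)
      also have "\<dots> \<le> \<epsilon>/16 * 2" using geom_half_sum[of n] eps by (intro mult_left_mono) auto
      finally show ?thesis by simp
    qed
    have f1: "nf e (S a p) = nf e e + nf e (S a p - e)" by (simp add: real_vector.linear_diff[OF lin])
    have "nf e (S a p - e) \<ge> - (\<epsilon>/16)" using fb[of "S a p - e"] close by linarith
    moreover have "norm (S a p) \<le> norm e + norm (S a p - e)" using norm_triangle_ineq[of e "S a p - e"] by simp
    moreover have "nf e (S a n) = nf e (S a p) + nf e (\<Sum>j\<in>{p..<n}. a j *\<^sub>R z j)"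
      using Ssplit by (simp add: real_vector.linear_add[OF lin])
    moreover have "nf e (S a n) \<le> norm (S a n)" using fb[of "S a n"] by linarith
    ultimately show ?thesis using f1 fe close tail by linarith
  qed
  have core: "\<epsilon>/4 \<le> norm (S a n)" if a: "\<forall>j<n. \<bar>a j\<bar> \<le> 1" and m: "m < n" "\<bar>a m\<bar> = 1" for a n m
  proof -
    have "S a (Suc m) - S a m = a m *\<^sub>R z m" unfolding S_def by simp
    then have "\<epsilon> \<le> norm (S a (Suc m) - S a m)" using zlow[of m] m by simp
    also have "\<dots> \<le> norm (S a (Suc m)) + norm (S a m)" by (rule norm_triangle_ineq4)
    finally show ?thesis using keyK[OF _ a, of m] keyK[OF _ a, of "Suc m"] m by linarith
  qed
  have lower: "\<epsilon>/4 * \<bar>a m\<bar> \<le> norm (S a n)" if mn: "m < n" for a n m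
  proof -
    define M where "M = Max ((\<lambda>j. \<bar>a j\<bar>) ` {..<n})"
    have Mge: "\<bar>a j\<bar> \<le> M" if "j < n" for j unfolding M_def using that by (intro Max_ge) auto
    have Mm: "\<bar>a m\<bar> \<le> M" using Mge mn by blast
    have "M \<in> (\<lambda>j. \<bar>a j\<bar>) ` {..<n}" unfolding M_def using mn by (intro Max_in) auto
    then obtain m' where m': "m' < n" "\<bar>a m'\<bar> = M" by auto
    show ?thesis
    proof (cases "M = 0")
      case True then show ?thesis using Mm by simp
    next
      case False
      have "0 \<le> \<bar>a m\<bar>" by simp
      then have Mpos: "M > 0" using Mm False by linarith
      define a' where "a' j = a j / M" for j
      have a': "\<forall>j<n. \<bar>a' j\<bar> \<le> 1" using Mge Mpos by (simp add: a'_def abs_divide)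
      have "\<bar>a' m'\<bar> = 1" using m' Mpos by (simp add: a'_def abs_divide)
      from core[OF a' m'(1) this] have c: "\<epsilon>/4 \<le> norm (S a' n)" .
      have "S a n = M *\<^sub>R S a' n" unfolding S_def scaleR_sum_right a'_def
        by (rule sum.cong[OF refl]) (use Mpos in simp)
      then have "norm (S a n) = M * norm (S a' n)" using Mpos by simp
      moreover have "\<epsilon>/4 * \<bar>a m\<bar> \<le> \<epsilon>/4 * M" using Mm eps by simp
      moreover have "\<epsilon>/4 * M \<le> M * norm (S a' n)" using c Mpos by (simp add: mult.commute mult_left_mono)
      ultimately show ?thesis by linarith
    qed
  qed
  define T where "T f = (\<Sum>j. f j *\<^sub>R z j)" for f :: "nat \<Rightarrow> real"
  have summ: "summable (\<lambda>j. f j *\<^sub>R z j)" if "f \<in> c0" for f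
  proof -
    have f0: "f \<longlonglongrightarrow> 0" using that unfolding c0_def by simp
    show ?thesis unfolding summable_Cauchy
    proof (intro allI impI)
      fix r :: real assume r: "r > 0"
      define \<delta> where "\<delta> = r / (2*K + 1)"
      have \<delta>: "\<delta> > 0" unfolding \<delta>_def using r Kpos by simp
      from f0 \<delta> obtain N where N: "\<forall>j\<ge>N. \<bar>f j\<bar> < \<delta>" unfolding LIMSEQ_iff by auto
      show "\<exists>N. \<forall>m\<ge>N. \<forall>n. norm (\<Sum>j\<in>{m..<n}. f j *\<^sub>R z j) < r"
      proof (intro exI allI impI)
        fix m n assume "N \<le> m"
        have "norm (\<Sum>j\<in>{m..<n}. f j *\<^sub>R z j) \<le> 2*K * \<delta>"
          by (rule wuc_norm[OF wucz]) (use N \<open>N \<le> m\<close> \<delta> in \<open>auto intro: less_imp_le\<close>)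
        also have "\<dots> < r" unfolding \<delta>_def using r Kpos by (simp add: field_simps)
        finally show "norm (\<Sum>j\<in>{m..<n}. f j *\<^sub>R z j) < r" .
      qed
    qed
  qed
  have bdd: "bdd_above (range (\<lambda>n. \<bar>f n\<bar>))" if "f \<in> c0" for f
  proof -
    have "Bseq f" using that unfolding c0_def by (auto intro: convergent_imp_Bseq convergentI)
    then obtain B where "\<forall>n. norm (f n) \<le> B" unfolding Bseq_def by auto
    then show ?thesis by (intro bdd_aboveI) auto
  qed
  have fsup: "\<bar>f n\<bar> \<le> sup_norm f" if "f \<in> c0" for f n
    unfolding sup_norm_def by (rule cSUP_upper[OF UNIV_I bdd[OF that]])
  have supnn: "0 \<le> sup_norm f" if "f \<in> c0" for f using fsup[OF that, of 0] by linarith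
  have lim: "(\<lambda>n. S f n) \<longlonglongrightarrow> T f" if "f \<in> c0" for f
    unfolding S_def T_def using summable_LIMSEQ[OF summ[OF that]] .
  have upper: "norm (T f) \<le> 2*K * sup_norm f" if f: "f \<in> c0" for f
  proof (rule LIMSEQ_le_const2[OF tendsto_norm[OF lim[OF f]]], intro exI allI impI)
    fix n :: nat
    show "norm (S f n) \<le> 2*K * sup_norm f" unfolding S_def
      by (rule wuc_norm[OF wucz]) (use fsup[OF f] supnn[OF f] in auto)
  qed
  have lowerT: "\<epsilon>/4 * sup_norm f \<le> norm (T f)" if f: "f \<in> c0" for f
  proof -
    have "\<epsilon>/4 * \<bar>f m\<bar> \<le> norm (T f)" for m
    proof (rule LIMSEQ_le_const[OF tendsto_norm[OF lim[OF f]]], intro exI allI impI)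
      fix n assume "Suc m \<le> n"
      then show "\<epsilon>/4 * \<bar>f m\<bar> \<le> norm (S f n)" using lower by simp
    qed
    then have "\<bar>f m\<bar> \<le> norm (T f) / (\<epsilon>/4)" for m using eps by (simp add: field_simps)
    then have "sup_norm f \<le> norm (T f) / (\<epsilon>/4)" unfolding sup_norm_def by (intro cSUP_least) auto
    then show ?thesis using eps by (simp add: field_simps)
  qed
  have addT: "T (\<lambda>n. f n + g n) = T f + T g" if "f \<in> c0" "g \<in> c0" for f g
    unfolding T_def using suminf_add[OF summ[OF that(1)] summ[OF that(2)]] by (simp add: scaleR_add_left)
  have homT: "T (\<lambda>n. c * f n) = c *\<^sub>R T f" if "f \<in> c0" for f c
    unfolding T_def using suminf_scaleR_right[OF summ[OF that], of c] by simp
  have A: "\<forall>f\<in>c0. \<forall>g\<in>c0. T (\<lambda>n. f n + g n) = T f + T g" using addT by blast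
  have B: "\<forall>f\<in>c0. \<forall>c. T (\<lambda>n. c * f n) = c *\<^sub>R T f" using homT by blast
  have C: "\<forall>f\<in>c0. \<epsilon>/4 * sup_norm f \<le> norm (T f) \<and> norm (T f) \<le> (2*K+1) * sup_norm f"
  proof
    fix f assume f: "f \<in> c0"
    show "\<epsilon>/4 * sup_norm f \<le> norm (T f) \<and> norm (T f) \<le> (2*K+1) * sup_norm f"
      using lowerT[OF f] upper[OF f] supnn[OF f] by (simp add: distrib_right)
  qed
  have pos: "\<epsilon>/4 > 0" "2*K+1 > 0" using eps Kpos by auto
  show ?thesis unfolding contains_c0_def
    by (rule exI[of _ T], rule exI[of _ "\<epsilon>/4"], rule exI[of _ "2*K+1"]) (use A B C pos in blast)
qed

lemma bp_lemma:
  fixes x :: "nat \<Rightarrow> 'a::banach"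
  assumes noc0: "\<not> contains_c0 TYPE('a)" and bd: "\<forall>F. finite F \<longrightarrow> norm (\<Sum>n\<in>F. x n) \<le> K"
  shows "uncond_convergent x"
proof -
  have uc: "\<forall>e>0. \<exists>N. \<forall>F. finite F \<longrightarrow> F \<subseteq> {N..} \<longrightarrow> norm (\<Sum>n\<in>F. x n) < e"
  proof (rule ccontr)
    assume "\<not> (\<forall>e>0. \<exists>N. \<forall>F. finite F \<longrightarrow> F \<subseteq> {N..} \<longrightarrow> norm (\<Sum>n\<in>F. x n) < e)"
    then obtain \<epsilon> :: real where eps: "\<epsilon> > 0"
      and bad: "\<forall>N. \<exists>F. finite F \<and> F \<subseteq> {N..} \<and> \<epsilon> \<le> norm (\<Sum>n\<in>F. x n)"
      by (auto simp: not_less)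
    define Fc where "Fc N = (SOME F. finite F \<and> F \<subseteq> {N..} \<and> \<epsilon> \<le> norm (\<Sum>n\<in>F. x n))" for N
    have Fc: "finite (Fc N) \<and> Fc N \<subseteq> {N..} \<and> \<epsilon> \<le> norm (\<Sum>n\<in>Fc N. x n)" for N
      unfolding Fc_def using someI_ex[OF bad[rule_format, of N]] .
    have Fne: "Fc N \<noteq> {}" for N using Fc[of N] eps by auto
    define Nn where "Nn = rec_nat 0 (\<lambda>_ m. Suc (Max (Fc m)))"
    have NnS: "Nn (Suc j) = Suc (Max (Fc (Nn j)))" for j unfolding Nn_def by simp
    define B where "B j = Fc (Nn j)" for j
    have Bsub: "B j \<subseteq> {Nn j ..< Nn (Suc j)}" for j
    proof
      fix n assume n: "n \<in> B j"
      have m1: "n \<le> Max (Fc (Nn j))" using n Fc[of "Nn j"] unfolding B_def by auto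
      have m2: "Nn j \<le> n" using n Fc[of "Nn j"] unfolding B_def by auto
      show "n \<in> {Nn j ..< Nn (Suc j)}" using m1 m2 unfolding NnS by simp
    qed
    have "Nn j < Nn (Suc j)" for j
    proof -
      obtain n where "n \<in> B j" using Fne unfolding B_def by blast
      then show ?thesis using Bsub[of j] by auto
    qed
    then have smN: "strict_mono Nn" by (simp add: strict_mono_Suc_iff)
    have disj: "B j \<inter> B k = {}" if "j < k" for j k
    proof -
      have "Nn (Suc j) \<le> Nn k" using smN that by (simp add: strict_mono_less_eq Suc_leI)
      then show ?thesis using Bsub[of j] Bsub[of k] by fastforce
    qed
    define u where "u j = (\<Sum>n\<in>B j. x n)" for j
    have ubd: "\<forall>A. finite A \<longrightarrow> norm (\<Sum>k\<in>A. u k) \<le> K"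
    proof (intro allI impI)
      fix A :: "nat set" assume A: "finite A"
      have finB: "\<forall>i\<in>A. finite (B i)" using Fc unfolding B_def by blast
      have dj: "\<forall>i\<in>A. \<forall>j\<in>A. i \<noteq> j \<longrightarrow> B i \<inter> B j = {}"
        using disj by (metis inf_commute linorder_neqE_nat)
      have "(\<Sum>k\<in>A. u k) = (\<Sum>n\<in>(\<Union>(B ` A)). x n)"
        unfolding u_def by (rule sum.UNION_disjoint[OF A finB dj, symmetric])
      moreover have "finite (\<Union>(B ` A))" using A finB by blast
      ultimately show "norm (\<Sum>k\<in>A. u k) \<le> K" using bd by simp
    qed
    have ulow: "\<forall>k. \<epsilon> \<le> norm (u k)" using Fc unfolding u_def B_def by blast
    have "contains_c0 TYPE('a)" by (rule c0_from_blocks[OF eps ulow ubd])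
    then show False using noc0 by simp
  qed
  show ?thesis unfolding uncond_convergent_def
  proof (intro allI impI)
    fix p :: "nat \<Rightarrow> nat" assume p: "bij p"
    have injp: "inj p" using p by (simp add: bij_def)
    show "summable (\<lambda>n. x (p n))" unfolding summable_Cauchy
    proof (intro allI impI)
      fix e :: real assume e: "e > 0"
      obtain N where N: "\<forall>F. finite F \<longrightarrow> F \<subseteq> {N..} \<longrightarrow> norm (\<Sum>n\<in>F. x n) < e" using uc e by blast
      have "finite (p -` {..<N})" using injp by (intro finite_vimageI) auto
      then obtain M where M: "p -` {..<N} \<subseteq> {..<M}" using finite_nat_bounded by blast
      show "\<exists>M. \<forall>m\<ge>M. \<forall>n. norm (\<Sum>i\<in>{m..<n}. x (p i)) < e"
      proof (intro exI[of _ M] allI impI)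
        fix m n assume mM: "M \<le> m"
        have inj: "inj_on p {m..<n}" using injp by (rule inj_on_subset) auto
        have "(\<Sum>i\<in>{m..<n}. x (p i)) = (\<Sum>k\<in>p ` {m..<n}. x k)"
          using sum.reindex[OF inj, of x] by (simp add: o_def)
        moreover have "p ` {m..<n} \<subseteq> {N..}"
        proof
          fix y assume "y \<in> p ` {m..<n}"
          then obtain i where i: "i \<in> {m..<n}" "y = p i" by blast
          show "y \<in> {N..}"
          proof (rule ccontr)
            assume "y \<notin> {N..}"
            then have "i \<in> p -` {..<N}" using i by auto
            then show False using M mM i by auto
          qed
        qed
        ultimately show "norm (\<Sum>i\<in>{m..<n}. x (p i)) < e" using N by simp
      qed
    qed
  qed
qed

lemma tail_unbounded:
  fixes x :: "nat \<Rightarrow> 'a::banach"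
  assumes noc0: "\<not> contains_c0 TYPE('a)" and nuc: "\<not> uncond_convergent x"
  shows "\<exists>F. finite F \<and> F \<subseteq> {N..} \<and> M < norm (\<Sum>n\<in>F. x n)"
proof (rule ccontr)
  assume "\<not> (\<exists>F. finite F \<and> F \<subseteq> {N..} \<and> M < norm (\<Sum>n\<in>F. x n))"
  then have tb: "\<And>F. finite F \<Longrightarrow> F \<subseteq> {N..} \<Longrightarrow> norm (\<Sum>n\<in>F. x n) \<le> M" by (auto simp: not_less)
  have "\<forall>F. finite F \<longrightarrow> norm (\<Sum>n\<in>F. x n) \<le> (\<Sum>i<N. norm (x i)) + M"
  proof (intro allI impI)
    fix F :: "nat set" assume F: "finite F"
    have "(\<Sum>n\<in>F. x n) = (\<Sum>n\<in>F \<inter> {..<N}. x n) + (\<Sum>n\<in>F - {..<N}. x n)" using sum.Int_Diff[OF F] .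
    then have "norm (\<Sum>n\<in>F. x n) \<le> norm (\<Sum>n\<in>F \<inter> {..<N}. x n) + norm (\<Sum>n\<in>F - {..<N}. x n)"
      by (simp add: norm_triangle_ineq)
    also have "norm (\<Sum>n\<in>F \<inter> {..<N}. x n) \<le> (\<Sum>n\<in>F \<inter> {..<N}. norm (x n))" by (rule norm_sum)
    also have "\<dots> \<le> (\<Sum>i<N. norm (x i))" by (rule sum_mono2) auto
    also have "norm (\<Sum>n\<in>F - {..<N}. x n) \<le> M" using F by (intro tb) auto
    finally show "norm (\<Sum>n\<in>F. x n) \<le> (\<Sum>i<N. norm (x i)) + M" by simp
  qed
  then have "uncond_convergent x" by (rule bp_lemma[OF noc0])
  with nuc show False by simp
qed

lemma topspace_baire: "topspace baire_top = UNIV"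
  unfolding baire_top_def by (simp add: PiE_UNIV_domain)

lemma nowhere_dense_criterion:
  assumes sub: "N \<subseteq> topspace T"
    and key: "\<And>U. openin T U \<Longrightarrow> U \<noteq> {} \<Longrightarrow> \<exists>V. openin T V \<and> V \<noteq> {} \<and> V \<subseteq> U \<and> V \<inter> N = {}"
  shows "nowhere_dense_in T N"
  unfolding nowhere_dense_in_def
proof (rule conjI[OF sub])
  define W where "W = T interior_of (T closure_of N)"
  show "T interior_of (T closure_of N) = {}"
  proof (rule ccontr)
    assume "T interior_of (T closure_of N) \<noteq> {}"
    then have W1: "W \<noteq> {}" unfolding W_def .
    have W2: "openin T W" unfolding W_def by (rule openin_interior_of)
    from key[OF W2 W1] obtain V where V: "openin T V" "V \<noteq> {}" "V \<subseteq> W" "V \<inter> N = {}" by blast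
    have c1: "V \<inter> T closure_of N = {}" using openin_Int_closure_of_eq_empty[OF V(1), of N] V(4) by simp
    have c2: "V \<subseteq> T closure_of N" using V(3) interior_of_subset[of T "T closure_of N"] unfolding W_def
      by (rule subset_trans)
    from c1 c2 have "V = {}" by (simp add: Int_absorb2)
    then show False using V(2) by simp
  qed
qed

lemma meager_generic:
  fixes X :: "(nat \<Rightarrow> nat) set" and x :: "nat \<Rightarrow> 'a::real_normed_vector"
  assumes ext: "\<And>s k M. s \<in> X \<Longrightarrow> \<exists>w\<in>X. \<exists>n\<ge>k. (\<forall>i<k. w i = s i) \<and> M < norm (\<Sum>i<n. x (w i))"
  shows "meager_in (subtopology baire_top X) {s \<in> X. bounded (range (\<lambda>n. \<Sum>i<n. x (s i)))}"
proof -
  define T where "T = subtopology baire_top X"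
  define E where "E M = {s \<in> X. \<forall>n. norm (\<Sum>i<n. x (s i)) \<le> real M}" for M :: nat
  have top: "topspace T = X" unfolding T_def by (simp add: topspace_baire)
  have cyl_open: "openin T {t \<in> X. \<forall>i<n. t i = w i}" for n and w :: "nat \<Rightarrow> nat"
  proof -
    have fin: "finite {i \<in> UNIV. (if i < n then {w i} else UNIV) \<noteq> topspace (discrete_topology (UNIV::nat set))}"
      by (rule finite_subset[of _ "{..<n}"]) auto
    have "openin baire_top (PiE UNIV (\<lambda>i. if i < n then {w i} else UNIV))"
      unfolding baire_top_def openin_PiE_gen using fin by auto
    moreover have "{t \<in> X. \<forall>i<n. t i = w i} = PiE UNIV (\<lambda>i. if i < n then {w i} else UNIV) \<inter> X"
      by (auto simp: PiE_iff, metis singletonD)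
    ultimately show ?thesis unfolding T_def by (simp add: openin_subtopology_Int)
  qed
  have nbhd: "\<exists>k. {t \<in> X. \<forall>i<k. t i = s i} \<subseteq> U" if U: "openin T U" and s: "s \<in> U" for U s
  proof -
    obtain V where V: "openin baire_top V" "U = V \<inter> X" using U unfolding T_def openin_subtopology by blast
    have "s \<in> V" using s V by blast
    then obtain W where W: "finite {i \<in> UNIV. W i \<noteq> topspace (discrete_topology (UNIV::nat set))}"
      "s \<in> PiE UNIV W" "PiE UNIV W \<subseteq> V"
      using V(1) unfolding baire_top_def openin_product_topology_alt by blast
    have "finite {i. W i \<noteq> UNIV}" using W(1) by simp
    then obtain k where k: "{i. W i \<noteq> UNIV} \<subseteq> {..<k}" using finite_nat_bounded by blast
    have "{t \<in> X. \<forall>i<k. t i = s i} \<subseteq> U"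
    proof
      fix t assume t: "t \<in> {t \<in> X. \<forall>i<k. t i = s i}"
      have "t i \<in> W i" for i
      proof (cases "i < k")
        case True then show ?thesis using t W(2) by (auto simp: PiE_iff)
      next
        case False then have "W i = UNIV" using k by auto
        then show ?thesis by simp
      qed
      then have "t \<in> PiE UNIV W" by (auto simp: PiE_iff)
      then show "t \<in> U" using W(3) V(2) t by blast
    qed
    then show ?thesis by blast
  qed
  have nd: "nowhere_dense_in T (E M)" for M
  proof (rule nowhere_dense_criterion)
    show "E M \<subseteq> topspace T" using top unfolding E_def by auto
  next
    fix U assume U: "openin T U" "U \<noteq> {}"
    then obtain s where s: "s \<in> U" by blast
    have sX: "s \<in> X" using s openin_subset[OF U(1)] top by blast
    obtain k where k: "{t \<in> X. \<forall>i<k. t i = s i} \<subseteq> U" using nbhd[OF U(1) s] by blast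
    obtain w n where w: "w \<in> X" "n \<ge> k" "\<forall>i<k. w i = s i" "real M < norm (\<Sum>i<n. x (w i))"
      using ext[OF sX, of k "real M"] by blast
    define V where "V = {t \<in> X. \<forall>i<n. t i = w i}"
    show "\<exists>V. openin T V \<and> V \<noteq> {} \<and> V \<subseteq> U \<and> V \<inter> E M = {}"
    proof (intro exI[of _ V] conjI)
      show "openin T V" unfolding V_def by (rule cyl_open)
      show "V \<noteq> {}" using w(1) unfolding V_def by blast
      show "V \<subseteq> U" using k w(2,3) unfolding V_def by auto
      show "V \<inter> E M = {}"
      proof (rule ccontr)
        assume "V \<inter> E M \<noteq> {}"
        then obtain t where t: "t \<in> V" "t \<in> E M" by blast
        have "(\<Sum>i<n. x (t i)) = (\<Sum>i<n. x (w i))" using t(1) unfolding V_def by (intro sum.cong) auto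
        moreover have "norm (\<Sum>i<n. x (t i)) \<le> real M" using t(2) unfolding E_def by blast
        ultimately show False using w(4) by simp
      qed
    qed
  qed
  show ?thesis unfolding meager_in_def T_def[symmetric]
  proof (intro exI[of _ "range E"] conjI ballI)
    show "countable (range E)" by simp
  next
    fix N assume "N \<in> range E" then show "nowhere_dense_in T N" using nd by blast
  next
    show "{s \<in> X. bounded (range (\<lambda>n. \<Sum>i<n. x (s i)))} \<subseteq> \<Union> (range E)"
    proof
      fix s assume s: "s \<in> {s \<in> X. bounded (range (\<lambda>n. \<Sum>i<n. x (s i)))}"
      then obtain B where B: "\<forall>n. norm (\<Sum>i<n. x (s i)) \<le> B" unfolding bounded_iff by blast
      have "\<forall>n. norm (\<Sum>i<n. x (s i)) \<le> real (nat \<lceil>B\<rceil>)"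
        using B real_nat_ceiling_ge[of B] by (meson order_trans)
      then have "s \<in> E (nat \<lceil>B\<rceil>)" using s unfolding E_def by blast
      then show "s \<in> \<Union> (range E)" by blast
    qed
  qed
qed

lemma sumlist_nth: "(\<Sum>i<length xs. x (xs!i)) = sum_list (map x xs)"
  by (simp add: sum_list_sum_nth atLeast0LessThan)

lemma prefix_sum: "sum_list (map x (map s [0..<k] @ l)) = (\<Sum>i<k. x (s i)) + sum_list (map x l)"
proof -
  have "sum_list (map x (map s [0..<k])) = (\<Sum>i<k. x (s i))"
    using sum_list_distinct_conv_sum_set[of "[0..<k]" "\<lambda>i. x (s i)"] by (simp add: atLeast0LessThan o_def)
  then show ?thesis by simp
qed

lemma ext_sorted:
  assumes "sorted_wrt (<) (xs :: nat list)"
  shows "strict_mono (\<lambda>i. if i < length xs then xs!i else Suc (Max (insert 0 (set xs))) + i)"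
proof -
  define C where "C = Suc (Max (insert 0 (set xs)))"
  have le: "y < C" if "y \<in> set xs" for y
    unfolding C_def using that by (simp add: le_imp_less_Suc)
  show ?thesis unfolding strict_mono_Suc_iff C_def[symmetric]
  proof
    fix i
    consider "Suc i < length xs" | "i < length xs" "\<not> Suc i < length xs" | "\<not> i < length xs" by linarith
    then show "(if i < length xs then xs!i else C + i) < (if Suc i < length xs then xs!Suc i else C + Suc i)"
    proof cases
      case 1 then show ?thesis using sorted_wrt_nth_less[OF assms, of i "Suc i"] by simp
    next
      case 2 then have "xs!i < C" using le by simp
      then show ?thesis using 2 by simp
    next
      case 3 then show ?thesis by simp
    qed
  qed
qed

lemma ext_distinct:
  assumes dist: "distinct (xs :: nat list)"
  shows "bij (\<lambda>i. if i < length xs then xs!i else enumerate (- set xs) (i - length xs))"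
proof -
  define R where "R = - set xs"
  have infR: "infinite R" unfolding R_def using finite_compl[of "set xs"] by simp
  have eb: "bij_betw (enumerate R) UNIV R" by (rule bij_enumerate[OF infR])
  then have einj: "inj (enumerate R)" and eimg: "range (enumerate R) = R" by (auto simp: bij_betw_def)
  define w where "w i = (if i < length xs then xs!i else enumerate R (i - length xs))" for i
  have eR: "enumerate R j \<in> R" for j using eimg by blast
  have "inj w"
  proof (rule injI)
    fix i j assume wij: "w i = w j"
    consider "i < length xs" "j < length xs" | "i < length xs" "\<not> j < length xs"
      | "\<not> i < length xs" "j < length xs" | "\<not> i < length xs" "\<not> j < length xs" by blast
    then show "i = j"
    proof cases
      case 1 then show ?thesis using wij dist by (simp add: w_def nth_eq_iff_index_eq)
    next
      case 2
      then have "xs!i = enumerate R (j - length xs)" using wij by (simp add: w_def)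
      then show ?thesis using nth_mem[OF 2(1)] eR[of "j - length xs"] unfolding R_def by auto
    next
      case 3
      then have "xs!j = enumerate R (i - length xs)" using wij by (simp add: w_def)
      then show ?thesis using nth_mem[OF 3(2)] eR[of "i - length xs"] unfolding R_def by auto
    next
      case 4
      then have "enumerate R (i - length xs) = enumerate R (j - length xs)" using wij by (simp add: w_def)
      then have "i - length xs = j - length xs" using einj by (simp add: inj_eq)
      then show ?thesis using 4 by simp
    qed
  qed
  moreover have "surj w"
  unfolding surj_def
  proof
    fix y :: nat
    show "\<exists>i. y = w i"
    proof (cases "y \<in> set xs")
      case True
      then obtain i where "i < length xs" "xs!i = y" by (auto simp: in_set_conv_nth)
      then show ?thesis by (intro exI[of _ i]) (simp add: w_def)
    next
      case False
      then have "y \<in> range (enumerate R)" using eimg unfolding R_def by blast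
      then obtain j where "y = enumerate R j" by blast
      then show ?thesis by (intro exI[of _ "length xs + j"]) (simp add: w_def)
    qed
  qed
  ultimately show ?thesis unfolding w_def R_def by (simp add: bij_def)
qed

lemma norm_gain:
  fixes a b :: "'a::real_normed_vector"
  assumes "M + norm a < norm b" shows "M < norm (a + b)"
proof -
  have "norm b \<le> norm (a + b) + norm a" using norm_triangle_ineq4[of "a + b" a] by simp
  then show ?thesis using assms by linarith
qed

lemma ext_S:
  fixes x :: "nat \<Rightarrow> 'a::real_normed_vector"
  assumes TU: "\<And>N M. \<exists>F. finite F \<and> F \<subseteq> {N..} \<and> M < norm (\<Sum>n\<in>F. x n)" and s: "s \<in> S_incr"
  shows "\<exists>w\<in>S_incr. \<exists>n\<ge>k. (\<forall>i<k. w i = s i) \<and> M < norm (\<Sum>i<n. x (w i))"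
proof -
  have sm: "strict_mono s" using s unfolding S_incr_def by simp
  define P0 where "P0 = (\<Sum>i<k. x (s i))"
  obtain F where F: "finite F" "F \<subseteq> {s k..}" "M + norm P0 < norm (\<Sum>n\<in>F. x n)" using TU by blast
  define l where "l = sorted_list_of_set F"
  define xs where "xs = map s [0..<k] @ l"
  have lF: "set l = F" "distinct l" "sorted_wrt (<) l" using F(1) unfolding l_def
    by (auto simp: strict_sorted_list_of_set)
  have s1: "sorted_wrt (<) (map s [0..<k])"
    unfolding sorted_wrt_iff_nth_less using sm by (auto simp: strict_mono_def)
  have s2: "\<forall>a\<in>set (map s [0..<k]). \<forall>b\<in>set l. a < b"
  proof (intro ballI)
    fix a b assume a: "a \<in> set (map s [0..<k])" and b: "b \<in> set l"
    then obtain i where "i < k" "a = s i" by auto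
    then have "a < s k" using sm by (simp add: strict_mono_def)
    moreover have "s k \<le> b" using b lF(1) F(2) by auto
    ultimately show "a < b" by simp
  qed
  have sxs: "sorted_wrt (<) xs" unfolding xs_def sorted_wrt_append using s1 lF(3) s2 by blast
  define w where "w = (\<lambda>i. if i < length xs then xs!i else Suc (Max (insert 0 (set xs))) + i)"
  have wS: "w \<in> S_incr" using ext_sorted[OF sxs] unfolding S_incr_def w_def by simp
  have len: "k \<le> length xs" unfolding xs_def by simp
  have wpre: "\<forall>i<k. w i = s i" using len unfolding w_def xs_def by (auto simp: nth_append)
  have "(\<Sum>i<length xs. x (w i)) = (\<Sum>i<length xs. x (xs!i))" unfolding w_def by (rule sum.cong) auto
  also have "\<dots> = P0 + (\<Sum>n\<in>F. x n)"
    unfolding sumlist_nth xs_def prefix_sum P0_def using lF by (simp add: sum_list_distinct_conv_sum_set)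
  finally have "M < norm (\<Sum>i<length xs. x (w i))" using norm_gain[OF F(3)] by simp
  then show ?thesis using wS len wpre by blast
qed

lemma ext_P:
  fixes x :: "nat \<Rightarrow> 'a::real_normed_vector"
  assumes TU: "\<And>N M. \<exists>F. finite F \<and> F \<subseteq> {N..} \<and> M < norm (\<Sum>n\<in>F. x n)" and s: "s \<in> P_perm"
  shows "\<exists>w\<in>P_perm. \<exists>n\<ge>k. (\<forall>i<k. w i = s i) \<and> M < norm (\<Sum>i<n. x (w i))"
proof -
  have bs: "bij s" using s unfolding P_perm_def by simp
  then have injs: "inj s" by (simp add: bij_def)
  define P0 where "P0 = (\<Sum>i<k. x (s i))"
  define N0 where "N0 = Suc (Max (insert 0 (s ` {..<k})))"
  obtain F where F: "finite F" "F \<subseteq> {N0..}" "M + norm P0 < norm (\<Sum>n\<in>F. x n)" using TU by blast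
  define l where "l = sorted_list_of_set F"
  define xs where "xs = map s [0..<k] @ l"
  have lF: "set l = F" "distinct l" using F(1) unfolding l_def by auto
  have d1: "distinct (map s [0..<k])" using inj_on_subset[OF injs subset_UNIV] by (simp add: distinct_map)
  have d2: "set (map s [0..<k]) \<inter> set l = {}"
  proof (rule ccontr)
    assume "set (map s [0..<k]) \<inter> set l \<noteq> {}"
    then obtain i where i: "i < k" "s i \<in> F" using lF(1) by auto
    have "s i \<le> Max (insert 0 (s ` {..<k}))" using i(1) by simp
    then have "s i < N0" unfolding N0_def by simp
    then show False using i(2) F(2) by auto
  qed
  have dxs: "distinct xs" unfolding xs_def using d1 lF(2) d2 by simp
  define w where "w = (\<lambda>i. if i < length xs then xs!i else enumerate (- set xs) (i - length xs))"
  have wP: "w \<in> P_perm" using ext_distinct[OF dxs] unfolding P_perm_def w_def by simp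
  have len: "k \<le> length xs" unfolding xs_def by simp
  have wpre: "\<forall>i<k. w i = s i" using len unfolding w_def xs_def by (auto simp: nth_append)
  have "(\<Sum>i<length xs. x (w i)) = (\<Sum>i<length xs. x (xs!i))" unfolding w_def by (rule sum.cong) auto
  also have "\<dots> = P0 + (\<Sum>n\<in>F. x n)"
    unfolding sumlist_nth xs_def prefix_sum P0_def using lF by (simp add: sum_list_distinct_conv_sum_set)
  finally have "M < norm (\<Sum>i<length xs. x (w i))" using norm_gain[OF F(3)] by simp
  then show ?thesis using wP len wpre by blast
qed

theorem mainTheorem4:
  fixes x :: "nat \<Rightarrow> 'a::banach"
  assumes "\<not> contains_c0 TYPE('a)"
    and "\<not> uncond_convergent x"
  shows "meager_in (subtopology baire_top S_incr)
           {s \<in> S_incr. bounded (range (\<lambda>n. \<Sum>i<n. x (s i)))}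
         \<and> meager_in (subtopology baire_top P_perm)
           {p \<in> P_perm. bounded (range (\<lambda>n. \<Sum>i<n. x (p i)))}"
proof -
  have TU: "\<And>N M. \<exists>F. finite F \<and> F \<subseteq> {N..} \<and> M < norm (\<Sum>n\<in>F. x n)"
    using tail_unbounded[OF assms] by blast
  show ?thesis
  proof
    show "meager_in (subtopology baire_top S_incr) {s \<in> S_incr. bounded (range (\<lambda>n. \<Sum>i<n. x (s i)))}"
      by (rule meager_generic) (rule ext_S[OF TU])
    show "meager_in (subtopology baire_top P_perm) {p \<in> P_perm. bounded (range (\<lambda>n. \<Sum>i<n. x (p i)))}"
      by (rule meager_generic) (rule ext_P[OF TU])
  qed
qed


end
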